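(* Let $z\ge1$, $X\subset[\Delta]^d$ finite, $x\in X$ and $p\in X$ fixed, and $r=\|x-p\|_2$. Let $Q\subseteq X$ be a set of at most $k$ centers containing $p$ that is a constant-factor approximation to the optimal $(k,z)$-medoids clustering on $X$ among sets containing a center at $p$, and let $\Psi$ be a constant-factor approximation to $\mathrm{Cost}(X,Q)$. Let $S$ be an optimal $(k,z)$-medoids clustering on $X$ among sets containing a center at $p$ and no center in the interior of $B_r(x)$. Let $n_b$ be the number of points of $X$ assigned by $Q$ to centers in $B_{r/2}(x)$ and let $n_a$ be the number of points assigned by $Q$ to centers in the annulus $B_r(x)\setminus B_{r/2}(x)$. If $n_b\ge n_a$, then there exist constants $\gamma_1,\gamma_2\ge1$ such that \[\mathrm{Cost}(X,S)\le\gamma_1(\Psi+n_b\cdot r^z)\le(\gamma_1\gamma_2)\cdot\mathrm{Cost}(X,S).\]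
   Context: $\mathrm{Cost}(X,C)=\sum_{y\in X}\min_{c\in C}\|y-c\|_2^z$; a point is assigned by $Q$ to its closest center in $Q$. A $(k,z)$-medoids clustering is a set of at most $k$ centers chosen from $X$. $B_\rho(x)$ denotes the Euclidean ball of radius $\rho$ centered at $x$. "Constant-factor approximation" means within a multiplicative constant factor; the constants $\gamma_1,\gamma_2$ may depend on these constants and on $z$. *)

theory Defs
  imports "HOL-Analysis.Analysis"
begin

text \<open>Points of R^d are represented as functions nat => real whose coordinates
  with index >= d vanish, so that the dimension d can be quantified inside the
  statement (the constants gamma must not depend on d or Delta).\<close>

definition edist :: "nat \<Rightarrow> (nat \<Rightarrow> real) \<Rightarrow> (nat \<Rightarrow> real) \<Rightarrow> real" where
  "edist d u v = sqrt (\<Sum>i<d. (u i - v i)^2)"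

definition grid :: "nat \<Rightarrow> nat \<Rightarrow> (nat \<Rightarrow> real) set" where
  "grid d \<Delta> = {v. (\<forall>i<d. v i \<in> real ` {1..\<Delta>}) \<and> (\<forall>i. d \<le> i \<longrightarrow> v i = 0)}"

definition eball :: "nat \<Rightarrow> (nat \<Rightarrow> real) \<Rightarrow> real \<Rightarrow> (nat \<Rightarrow> real) set" where
  "eball d x \<rho> = {c. edist d x c \<le> \<rho>}"

definition eball_open :: "nat \<Rightarrow> (nat \<Rightarrow> real) \<Rightarrow> real \<Rightarrow> (nat \<Rightarrow> real) set" where
  "eball_open d x \<rho> = {c. edist d x c < \<rho>}"

definition cost :: "nat \<Rightarrow> real \<Rightarrow> (nat \<Rightarrow> real) set \<Rightarrow> (nat \<Rightarrow> real) set \<Rightarrow> real" where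
  "cost d z X C = (\<Sum>y\<in>X. Min ((\<lambda>c. edist d y c powr z) ` C))"

definition medoids_p :: "(nat \<Rightarrow> real) set \<Rightarrow> nat \<Rightarrow> (nat \<Rightarrow> real) \<Rightarrow> (nat \<Rightarrow> real) set \<Rightarrow> bool" where
  "medoids_p X k p C \<longleftrightarrow> C \<subseteq> X \<and> card C \<le> k \<and> p \<in> C"

definition nearest_assignment ::
  "nat \<Rightarrow> (nat \<Rightarrow> real) set \<Rightarrow> (nat \<Rightarrow> real) set \<Rightarrow> ((nat \<Rightarrow> real) \<Rightarrow> (nat \<Rightarrow> real)) \<Rightarrow> bool" where
  "nearest_assignment d X Q \<sigma> \<longleftrightarrow>
     (\<forall>y\<in>X. \<sigma> y \<in> Q \<and> (\<forall>c\<in>Q. edist d y (\<sigma> y) \<le> edist d y c))"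

end

theory Submission
  imports Defs
begin

lemma edist_L2: "edist d u v = L2_set (\<lambda>i. u i - v i) {..<d}"
  unfolding edist_def L2_set_def by simp

lemma edist_nonneg: "edist d u v \<ge> 0"
  unfolding edist_def by (simp add: sum_nonneg)

lemma edist_sym: "edist d u v = edist d v u"
  unfolding edist_def by (simp add: power2_commute)

lemma edist_tri: "edist d u w \<le> edist d u v + edist d v w"
proof -
  have "edist d u w = L2_set (\<lambda>i. (u i - v i) + (v i - w i)) {..<d}"
    unfolding edist_L2 by simp
  also have "\<dots> \<le> edist d u v + edist d v w"
    unfolding edist_L2 by (rule L2_set_triangle_ineq)
  finally show ?thesis .
qed

lemma powr_sum_le:
  fixes a b z :: real
  assumes "a \<ge> 0" "b \<ge> 0" "z \<ge> 1"
  shows "(a + b) powr z \<le> 2 powr z * (a powr z + b powr z)"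
proof -
  have m: "a + b \<le> 2 * max a b" by simp
  have "(a + b) powr z \<le> (2 * max a b) powr z"
    using assms m by (intro powr_mono2) auto
  also have "\<dots> = 2 powr z * (max a b) powr z"
    using assms by (simp add: powr_mult)
  also have "(max a b) powr z \<le> a powr z + b powr z"
    by (cases "a \<le> b") (auto simp: max_def)
  then have "2 powr z * (max a b) powr z \<le> 2 powr z * (a powr z + b powr z)"
    by simp
  finally show ?thesis .
qed

lemma powr_half_le:
  fixes a b t z :: real
  assumes "a \<ge> 0" "b \<ge> 0" "z \<ge> 1" "t \<le> a + b" "t \<ge> 0"
  shows "t powr z \<le> 2 powr z * (a powr z + b powr z)"
proof -
  have "t powr z \<le> (a + b) powr z" using assms by (intro powr_mono2) auto
  also have "\<dots> \<le> 2 powr z * (a powr z + b powr z)" using powr_sum_le assms by blast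
  finally show ?thesis .
qed

lemma min_ge_nearest:
  assumes "finite Q" "y \<in> X" "nearest_assignment d X Q \<sigma>" "z \<ge> 1"
  shows "edist d y (\<sigma> y) powr z \<le> Min ((\<lambda>c. edist d y c powr z) ` Q)"
proof -
  have sq: "\<sigma> y \<in> Q" and le: "\<forall>c\<in>Q. edist d y (\<sigma> y) \<le> edist d y c"
    using assms unfolding nearest_assignment_def by auto
  show ?thesis
    using assms(1) sq le edist_nonneg assms(4)
    by (subst Min_ge_iff) (auto intro!: powr_mono2)
qed

lemma sum_nearest_le:
  assumes "finite X" "finite Q" "nearest_assignment d X Q \<sigma>" "z \<ge> 1"
  shows "(\<Sum>y\<in>X. edist d y (\<sigma> y) powr z) \<le> cost d z X Q"
  unfolding cost_def using assms by (intro sum_mono min_ge_nearest) auto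
lemma upper_bound:
  assumes z: "z \<ge> 1" and fX: "finite X" and r: "r = edist d x p" and pX: "p \<in> X"
    and mQ: "medoids_p X k p Q"
    and optS: "\<forall>C. medoids_p X k p C \<and> C \<inter> eball_open d x r = {} \<longrightarrow>
           cost d z X S \<le> cost d z X C"
    and na: "nearest_assignment d X Q \<sigma>"
    and cnt: "card {y\<in>X. \<sigma> y \<in> eball d x (r/2)} \<ge>
        card {y\<in>X. \<sigma> y \<in> eball d x r - eball d x (r/2)}"
  shows "cost d z X S \<le> 2 powr z * cost d z X Q
     + 2 * 8 powr z * real (card {y\<in>X. \<sigma> y \<in> eball d x (r/2)}) * r powr z"
proof -
  define C where "C = Q - eball_open d x r"
  have QX: "Q \<subseteq> X" "card Q \<le> k" "p \<in> Q" using mQ unfolding medoids_p_def by auto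
  have fQ: "finite Q" using QX fX finite_subset by blast
  have pC: "p \<in> C" unfolding C_def eball_open_def using QX r by auto
  have mC: "medoids_p X k p C" unfolding medoids_p_def C_def
    using QX fQ card_mono[of Q "Q - eball_open d x r"] pC C_def by auto
  have SC: "cost d z X S \<le> cost d z X C"
    using optS mC unfolding C_def by auto
  define g where "g y = 2 powr z * edist d y (\<sigma> y) powr z +
     (if \<sigma> y \<in> eball_open d x r then 2 powr z * (2*r) powr z else 0)" for y
  have r0: "r \<ge> 0" using r edist_nonneg by simp
  have fC: "finite C" using fQ C_def by auto
  have "cost d z X C \<le> (\<Sum>y\<in>X. g y)"
    unfolding cost_def
  proof (rule sum_mono)
    fix y assume yX: "y \<in> X"
    have sq: "\<sigma> y \<in> Q" using na yX unfolding nearest_assignment_def by auto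
    have a0: "edist d y (\<sigma> y) powr z \<ge> 0" by simp
    show "Min ((\<lambda>c. edist d y c powr z) ` C) \<le> g y"
    proof (cases "\<sigma> y \<in> eball_open d x r")
      case False
      then have "\<sigma> y \<in> C" using sq C_def by auto
      then have "Min ((\<lambda>c. edist d y c powr z) ` C) \<le> edist d y (\<sigma> y) powr z"
        using fC by (intro Min_le) auto
      also have "\<dots> \<le> 2 powr z * edist d y (\<sigma> y) powr z"
        using a0 z ge_one_powr_ge_zero[of 2 z] by (simp add: mult_le_cancel_right1)
      finally show ?thesis unfolding g_def using False by simp
    next
      case True
      have "Min ((\<lambda>c. edist d y c powr z) ` C) \<le> edist d y p powr z"
        using fC pC by (intro Min_le) auto
      also have "edist d y p \<le> edist d y (\<sigma> y) + 2 * r"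
      proof -
        have "edist d y p \<le> edist d y (\<sigma> y) + edist d (\<sigma> y) p" by (rule edist_tri)
        also have "edist d (\<sigma> y) p \<le> edist d (\<sigma> y) x + edist d x p" by (rule edist_tri)
        also have "edist d (\<sigma> y) x < r" using True unfolding eball_open_def
          by (simp add: edist_sym)
        finally show ?thesis using r by simp
      qed
      then have "edist d y p powr z \<le> (edist d y (\<sigma> y) + 2 * r) powr z"
        using edist_nonneg z by (intro powr_mono2) auto
      also have "\<dots> \<le> 2 powr z * (edist d y (\<sigma> y) powr z + (2*r) powr z)"
        using powr_sum_le[of "edist d y (\<sigma> y)" "2*r" z] edist_nonneg r0 z by auto
      finally show ?thesis unfolding g_def using True by (simp add: algebra_simps)
    qed
  qed
  also have "(\<Sum>y\<in>X. g y) = 2 powr z * (\<Sum>y\<in>X. edist d y (\<sigma> y) powr z)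
     + 2 powr z * (2*r) powr z * real (card {y\<in>X. \<sigma> y \<in> eball_open d x r})"
    unfolding g_def sum.distrib sum_distrib_left[symmetric]
    using fX by (simp add: sum.inter_filter[symmetric])
  also have "(\<Sum>y\<in>X. edist d y (\<sigma> y) powr z) \<le> cost d z X Q"
    using sum_nearest_le fX fQ na z by blast
  also have "real (card {y\<in>X. \<sigma> y \<in> eball_open d x r})
      \<le> 2 * real (card {y\<in>X. \<sigma> y \<in> eball d x (r/2)})"
  proof -
    have "{y\<in>X. \<sigma> y \<in> eball_open d x r} \<subseteq> {y\<in>X. \<sigma> y \<in> eball d x (r/2)} \<union>
        {y\<in>X. \<sigma> y \<in> eball d x r - eball d x (r/2)}"
      unfolding eball_def eball_open_def by auto
    then have "card {y\<in>X. \<sigma> y \<in> eball_open d x r} \<le> card ({y\<in>X. \<sigma> y \<in> eball d x (r/2)} \<union>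
        {y\<in>X. \<sigma> y \<in> eball d x r - eball d x (r/2)})"
      using fX by (intro card_mono) auto
    also have "\<dots> \<le> card {y\<in>X. \<sigma> y \<in> eball d x (r/2)} +
        card {y\<in>X. \<sigma> y \<in> eball d x r - eball d x (r/2)}" by (rule card_Un_le)
    finally show ?thesis using cnt by linarith
  qed
  also have "(2::real) powr z * (2*r) powr z = 4 powr z * r powr z"
    using r0 by (simp add: powr_mult[symmetric])
  finally have A: "cost d z X S \<le> 2 powr z * cost d z X Q +
      4 powr z * r powr z * (2 * real (card {y\<in>X. \<sigma> y \<in> eball d x (r/2)}))"
    using SC by (simp add: mult_left_mono)
  define nb where "nb = real (card {y\<in>X. \<sigma> y \<in> eball d x (r/2)})"
  have "4 powr z * r powr z \<le> 8 powr z * r powr z"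
    using z by (intro mult_right_mono powr_mono2) auto
  then have B: "4 powr z * r powr z * (2*nb) \<le> 8 powr z * r powr z * (2*nb)"
    by (rule mult_right_mono) (simp add: nb_def)
  have eq: "8 powr z * r powr z * (2*nb) = 2 * 8 powr z * nb * r powr z" by (simp add: algebra_simps)
  show ?thesis using A B eq unfolding nb_def[symmetric] by linarith
qed
lemma lower_bound:
  assumes z: "z \<ge> 1" and fX: "finite X" and r: "r = edist d x p"
    and mS: "medoids_p X k p S" and SB: "S \<inter> eball_open d x r = {}"
    and mQ: "medoids_p X k p Q"
    and na: "nearest_assignment d X Q \<sigma>"
  shows "real (card {y\<in>X. \<sigma> y \<in> eball d x (r/2)}) * r powr z
     \<le> 4 powr z * (cost d z X Q + cost d z X S)"
proof -
  have fQ: "finite Q" using mQ fX finite_subset unfolding medoids_p_def by blast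
  have fS: "finite S" and pS: "p \<in> S" using mS fX finite_subset unfolding medoids_p_def by blast+
  have r0: "r \<ge> 0" using r edist_nonneg by simp
  define B where "B = {y\<in>X. \<sigma> y \<in> eball d x (r/2)}"
  define a where "a y = edist d y (\<sigma> y) powr z" for y
  define b where "b y = Min ((\<lambda>c. edist d y c powr z) ` S)" for y
  have b0: "b y \<ge> 0" for y
    using fS pS unfolding b_def by (subst Min_ge_iff) auto
  have key: "(r/2) powr z \<le> 2 powr z * (a y + b y)" if yB: "y \<in> B" for y
  proof -
    have "b y \<in> (\<lambda>c. edist d y c powr z) ` S"
      unfolding b_def using fS pS by (intro Min_in) auto
    then obtain s where sS: "s \<in> S" and bs: "b y = edist d y s powr z" by auto
    have "edist d x s \<ge> r" using sS SB unfolding eball_open_def by auto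
    also have "edist d x s \<le> edist d x (\<sigma> y) + edist d (\<sigma> y) s" by (rule edist_tri)
    also have "edist d (\<sigma> y) s \<le> edist d (\<sigma> y) y + edist d y s" by (rule edist_tri)
    also have "edist d x (\<sigma> y) \<le> r/2" using yB unfolding B_def eball_def by auto
    finally have "r/2 \<le> edist d y (\<sigma> y) + edist d y s" by (simp add: edist_sym)
    then show ?thesis unfolding a_def bs
      using powr_half_le[of "edist d y (\<sigma> y)" "edist d y s" z "r/2"] edist_nonneg z r0
      by auto
  qed
  have "real (card B) * (r/2) powr z = (\<Sum>y\<in>B. (r/2) powr z)" by simp
  also have "\<dots> \<le> (\<Sum>y\<in>B. 2 powr z * (a y + b y))" by (intro sum_mono key)
  also have "\<dots> \<le> (\<Sum>y\<in>X. 2 powr z * (a y + b y))"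
    using fX b0 unfolding B_def a_def by (intro sum_mono2) auto
  also have "\<dots> = 2 powr z * ((\<Sum>y\<in>X. a y) + (\<Sum>y\<in>X. b y))"
    by (simp add: sum_distrib_left[symmetric] sum.distrib)
  also have "(\<Sum>y\<in>X. a y) \<le> cost d z X Q"
    unfolding a_def using sum_nearest_le fX fQ na z by blast
  also have "(\<Sum>y\<in>X. b y) = cost d z X S" unfolding b_def cost_def by simp
  finally have A: "real (card B) * (r/2) powr z \<le> 2 powr z * (cost d z X Q + cost d z X S)"
    by (simp add: mult_left_mono)
  have "r powr z = 2 powr z * (r/2) powr z" using r0 by (simp add: powr_mult[symmetric])
  then have "real (card B) * r powr z = 2 powr z * (real (card B) * (r/2) powr z)" by simp
  also have "\<dots> \<le> 2 powr z * (2 powr z * (cost d z X Q + cost d z X S))"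
    using A by (intro mult_left_mono) auto
  also have "2 powr z * (2 powr z * (cost d z X Q + cost d z X S)) = 4 powr z * (cost d z X Q + cost d z X S)"
    by (simp add: powr_mult[symmetric])
  finally show ?thesis unfolding B_def .
qed
theorem lemma3p9:
  fixes z \<alpha> \<beta> :: real
  assumes "z \<ge> 1" and "\<alpha> \<ge> 1" and "\<beta> \<ge> 1"
  shows "\<exists>\<gamma>1 \<gamma>2. \<gamma>1 \<ge> 1 \<and> \<gamma>2 \<ge> 1 \<and>
    (\<forall>(d::nat) (\<Delta>::nat) X (k::nat) x p r Q \<Psi> S \<sigma>.
      X \<subseteq> grid d \<Delta> \<and> finite X \<and> x \<in> X \<and> p \<in> X \<and> r = edist d x p \<and>
      medoids_p X k p Q \<and>
      (\<forall>C. medoids_p X k p C \<longrightarrow> cost d z X Q \<le> \<alpha> * cost d z X C) \<and>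
      cost d z X Q / \<beta> \<le> \<Psi> \<and> \<Psi> \<le> \<beta> * cost d z X Q \<and>
      medoids_p X k p S \<and> S \<inter> eball_open d x r = {} \<and>
      (\<forall>C. medoids_p X k p C \<and> C \<inter> eball_open d x r = {} \<longrightarrow>
           cost d z X S \<le> cost d z X C) \<and>
      nearest_assignment d X Q \<sigma> \<and>
      card {y\<in>X. \<sigma> y \<in> eball d x (r/2)} \<ge>
        card {y\<in>X. \<sigma> y \<in> eball d x r - eball d x (r/2)}
      \<longrightarrow>
      (let nb = real (card {y\<in>X. \<sigma> y \<in> eball d x (r/2)}) in
        cost d z X S \<le> \<gamma>1 * (\<Psi> + nb * r powr z) \<and>
        \<gamma>1 * (\<Psi> + nb * r powr z) \<le> (\<gamma>1 * \<gamma>2) * cost d z X S))"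
proof -
  have z: "z \<ge> 1" and al: "\<alpha> \<ge> 1" and be: "\<beta> \<ge> 1" using assms by auto
  define g1 where "g1 = 2 * 8 powr z * \<beta>"
  define g2 where "g2 = \<alpha> * \<beta> + 4 powr z * (\<alpha> + 1)"
  have e8: "1 \<le> (8::real) powr z" using z by (intro ge_one_powr_ge_zero) auto
  have e4: "1 \<le> (4::real) powr z" using z by (intro ge_one_powr_ge_zero) auto
  have e2: "1 \<le> (2::real) powr z" using z by (intro ge_one_powr_ge_zero) auto
  have 28: "(2::real) powr z \<le> 8 powr z" using z by (intro powr_mono2) auto
  have g1: "g1 \<ge> 1"
  proof -
    have "1 * 1 \<le> 8 powr z * \<beta>" using e8 be by (intro mult_mono) auto
    moreover have "2 * 8 powr z * \<beta> = 2 * (8 powr z * \<beta>)" by simp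
    ultimately show ?thesis unfolding g1_def by linarith
  qed
  have g2: "g2 \<ge> 1"
  proof -
    have "1 * 1 \<le> \<alpha> * \<beta>" using al be by (intro mult_mono) auto
    moreover have "0 \<le> 4 powr z * (\<alpha> + 1)" using al by simp
    ultimately show ?thesis unfolding g2_def by linarith
  qed
  show ?thesis
  proof (rule exI[of _ g1], rule exI[of _ g2], intro conjI g1 g2 allI impI)
    fix d \<Delta> X k x p r Q \<Psi> S \<sigma>
    assume H: "X \<subseteq> grid d \<Delta> \<and> finite X \<and> x \<in> X \<and> p \<in> X \<and> r = edist d x p \<and>
      medoids_p X k p Q \<and>
      (\<forall>C. medoids_p X k p C \<longrightarrow> cost d z X Q \<le> \<alpha> * cost d z X C) \<and>
      cost d z X Q / \<beta> \<le> \<Psi> \<and> \<Psi> \<le> \<beta> * cost d z X Q \<and>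
      medoids_p X k p S \<and> S \<inter> eball_open d x r = {} \<and>
      (\<forall>C. medoids_p X k p C \<and> C \<inter> eball_open d x r = {} \<longrightarrow>
           cost d z X S \<le> cost d z X C) \<and>
      nearest_assignment d X Q \<sigma> \<and>
      card {y\<in>X. \<sigma> y \<in> eball d x (r/2)} \<ge>
        card {y\<in>X. \<sigma> y \<in> eball d x r - eball d x (r/2)}"
    define nb where "nb = real (card {y\<in>X. \<sigma> y \<in> eball d x (r/2)})"
    define cQ where "cQ = cost d z X Q"
    define cS where "cS = cost d z X S"
    have fX: "finite X" and r: "r = edist d x p" and pX: "p \<in> X"
      and mQ: "medoids_p X k p Q" and mS: "medoids_p X k p S"
      and SB: "S \<inter> eball_open d x r = {}" and na: "nearest_assignment d X Q \<sigma>"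
      using H by auto
    have U: "cS \<le> 2 powr z * cQ + 2 * 8 powr z * nb * r powr z"
      unfolding cS_def cQ_def nb_def
      using upper_bound[OF z fX r pX mQ _ na] H by blast
    have L: "nb * r powr z \<le> 4 powr z * (cQ + cS)"
      unfolding cS_def cQ_def nb_def using lower_bound[OF z fX r mS SB mQ na] .
    have QS: "cQ \<le> \<alpha> * cS" unfolding cQ_def cS_def using H mS by blast
    have P1: "cQ \<le> \<beta> * \<Psi>" using H be unfolding cQ_def by (simp add: field_simps)
    have P2: "\<Psi> \<le> \<beta> * cQ" using H unfolding cQ_def by simp
    have fQ: "finite Q" "Q \<noteq> {}" using mQ fX finite_subset unfolding medoids_p_def by blast+
    have cQ0: "cQ \<ge> 0" unfolding cQ_def cost_def
      by (intro sum_nonneg) (use fQ in \<open>simp add: Min_ge_iff\<close>)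
    have fS: "finite S" "S \<noteq> {}" using mS fX finite_subset unfolding medoids_p_def by blast+
    have cS0: "cS \<ge> 0" unfolding cS_def cost_def
      by (intro sum_nonneg) (use fS in \<open>simp add: Min_ge_iff\<close>)
    have P0: "cQ / \<beta> \<le> \<Psi>" using H unfolding cQ_def by simp
    have "0 \<le> cQ / \<beta>" using cQ0 be by simp
    then have Psi0: "\<Psi> \<ge> 0" using P0 by linarith
    have nbr0: "nb * r powr z \<ge> 0" unfolding nb_def by simp
    have "2 powr z * cQ \<le> 2 powr z * (\<beta> * \<Psi>)"
      using P1 e2 by (intro mult_left_mono) auto
    then have "cS \<le> 2 powr z * (\<beta> * \<Psi>) + 2 * 8 powr z * nb * r powr z"
      using U by linarith
    also have "2 powr z * (\<beta> * \<Psi>) \<le> g1 * \<Psi>"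
    proof -
      have bp: "\<beta> * \<Psi> \<ge> 0" using be Psi0 by simp
      have "2 powr z * (\<beta> * \<Psi>) \<le> 8 powr z * (\<beta> * \<Psi>)"
        using 28 bp by (rule mult_right_mono)
      also have "\<dots> \<le> 2 * (8 powr z * (\<beta> * \<Psi>))"
      proof -
        have "0 \<le> 8 powr z * (\<beta> * \<Psi>)" using bp by simp
        then show ?thesis by linarith
      qed
      also have "\<dots> = g1 * \<Psi>" unfolding g1_def by (simp add: algebra_simps)
      finally show ?thesis .
    qed
    also have "2 * 8 powr z * nb * r powr z \<le> g1 * (nb * r powr z)"
    proof -
      have t: "2 * 8 powr z * (nb * r powr z) \<ge> 0" using nbr0 by simp
      have "2 * 8 powr z * (nb * r powr z) * 1 \<le> 2 * 8 powr z * (nb * r powr z) * \<beta>"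
        using be t by (rule mult_left_mono)
      then show ?thesis unfolding g1_def by (simp add: algebra_simps)
    qed
    finally have I1: "cS \<le> g1 * (\<Psi> + nb * r powr z)" by (simp add: algebra_simps)
    have "\<Psi> + nb * r powr z \<le> \<beta> * cQ + 4 powr z * (cQ + cS)" using P2 L by simp
    also have "\<dots> \<le> \<beta> * (\<alpha> * cS) + 4 powr z * (\<alpha> * cS + cS)"
    proof -
      have "\<beta> * cQ \<le> \<beta> * (\<alpha> * cS)" using QS be by (intro mult_left_mono) auto
      moreover have "4 powr z * (cQ + cS) \<le> 4 powr z * (\<alpha> * cS + cS)"
        using QS e4 by (intro mult_left_mono) auto
      ultimately show ?thesis by linarith
    qed
    also have "\<dots> = g2 * cS" unfolding g2_def by (simp add: algebra_simps)
    finally have I2: "\<Psi> + nb * r powr z \<le> g2 * cS" .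
    have "g1 * (\<Psi> + nb * r powr z) \<le> g1 * (g2 * cS)" using I2 g1 by (intro mult_left_mono) auto
    then have I3: "g1 * (\<Psi> + nb * r powr z) \<le> (g1 * g2) * cS" by (simp add: mult.assoc)
    show "let nb = real (card {y\<in>X. \<sigma> y \<in> eball d x (r/2)}) in
        cost d z X S \<le> g1 * (\<Psi> + nb * r powr z) \<and>
        g1 * (\<Psi> + nb * r powr z) \<le> (g1 * g2) * cost d z X S"
      using I1 I3 unfolding nb_def cS_def Let_def by simp
  qed
qed

end
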